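(* Let $P$ be a finite poset, $R$ a commutative unital ring, and $D$ a derivation of $I^3(P,R)$. Then for all $x\in P$, $$D(e_x)=\sum_{v\in P,\ x<v}D(e_x)(x,x,v)\,e_{xxv}+\sum_{u\in P,\ u<x}D(e_x)(u,x,x)\,e_{uxx}.$$
   Context: For a finite poset $P$, $P^3_\le=\{(x,y,z)\in P^3: x\le y\le z\}$, and $I^3(P,R)$ is the $R$-module of functions $f:P^3_\le\to R$ with multiplication $(fg)(x_1,x_2,x_3)=\sum f(x_1,y_1,y_2)g(y_1,y_2,x_3)$ over all $x_1\le y_1\le x_2\le y_2\le x_3$. For $x\le y\le z$, $e_{xyz}$ is the function equal to $1$ at $(x,y,z)$ and $0$ elsewhere, and $e_x:=e_{xxx}$. A derivation is an $R$-linear map $D:I^3(P,R)\to I^3(P,R)$ with $D(fg)=D(f)g+fD(g)$. *)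

theory Defs
  imports Main
begin

text \<open>The finite poset P is the type 'a of class order and finite.
  Elements of I^3(P,R) are functions 'a => 'a => 'a => 'r that vanish
  outside P^3_le = {(x,y,z). x <= y <= z}.\<close>

definition I3 :: "('a::{order,finite} \<Rightarrow> 'a \<Rightarrow> 'a \<Rightarrow> 'r::comm_ring_1) set" where
  "I3 = {f. \<forall>x y z. \<not> (x \<le> y \<and> y \<le> z) \<longrightarrow> f x y z = 0}"

definition mult3 ::
  "('a::{order,finite} \<Rightarrow> 'a \<Rightarrow> 'a \<Rightarrow> 'r::comm_ring_1) \<Rightarrow> ('a \<Rightarrow> 'a \<Rightarrow> 'a \<Rightarrow> 'r) \<Rightarrow> ('a \<Rightarrow> 'a \<Rightarrow> 'a \<Rightarrow> 'r)" where
  "mult3 f g = (\<lambda>x1 x2 x3. if x1 \<le> x2 \<and> x2 \<le> x3 then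
      (\<Sum>(y1, y2) \<in> {(y1, y2). x1 \<le> y1 \<and> y1 \<le> x2 \<and> x2 \<le> y2 \<and> y2 \<le> x3}.
         f x1 y1 y2 * g y1 y2 x3)
    else 0)"

definition e3 :: "'a::{order,finite} \<Rightarrow> 'a \<Rightarrow> 'a \<Rightarrow> ('a \<Rightarrow> 'a \<Rightarrow> 'a \<Rightarrow> 'r::comm_ring_1)" where
  "e3 x y z = (\<lambda>a b c. if a = x \<and> b = y \<and> c = z then 1 else 0)"

definition e1 :: "'a::{order,finite} \<Rightarrow> ('a \<Rightarrow> 'a \<Rightarrow> 'a \<Rightarrow> 'r::comm_ring_1)" where
  "e1 x = e3 x x x"

definition derivation3 ::
  "(('a::{order,finite} \<Rightarrow> 'a \<Rightarrow> 'a \<Rightarrow> 'r::comm_ring_1) \<Rightarrow> ('a \<Rightarrow> 'a \<Rightarrow> 'a \<Rightarrow> 'r)) \<Rightarrow> bool" where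
  "derivation3 D \<longleftrightarrow>
     (\<forall>f \<in> I3. D f \<in> I3) \<and>
     (\<forall>f \<in> I3. \<forall>g \<in> I3. D (\<lambda>x y z. f x y z + g x y z) = (\<lambda>x y z. D f x y z + D g x y z)) \<and>
     (\<forall>r. \<forall>f \<in> I3. D (\<lambda>x y z. r * f x y z) = (\<lambda>x y z. r * D f x y z)) \<and>
     (\<forall>f \<in> I3. \<forall>g \<in> I3. D (mult3 f g) = (\<lambda>x y z. mult3 (D f) g x y z + mult3 f (D g) x y z))"

end

theory Submission
  imports Defs
begin

lemma e1_I3: "(e1 x :: 'a::{order,finite} \<Rightarrow> 'a \<Rightarrow> 'a \<Rightarrow> 'r::comm_ring_1) \<in> I3"
  by (auto simp: I3_def e1_def e3_def)

lemma mult_d_e: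
  fixes d :: "'a::{order,finite} \<Rightarrow> 'a \<Rightarrow> 'a \<Rightarrow> 'r::comm_ring_1"
  shows "mult3 d (e1 x) a b c = (if a \<le> b \<and> b = x \<and> c = x then d a x x else 0)"
proof -
  have "(\<Sum>(y1, y2) \<in> {(y1, y2). a \<le> y1 \<and> y1 \<le> b \<and> b \<le> y2 \<and> y2 \<le> c}.
         d a y1 y2 * e1 x y1 y2 c) =
        (\<Sum>p \<in> {(y1, y2). a \<le> y1 \<and> y1 \<le> b \<and> b \<le> y2 \<and> y2 \<le> c}.
         if p = (x, x) then (if c = x then d a x x else 0) else 0)"
    by (rule sum.cong) (auto simp: e1_def e3_def split: if_splits)
  also have "\<dots> = (if (x,x) \<in> {(y1, y2). a \<le> y1 \<and> y1 \<le> b \<and> b \<le> y2 \<and> y2 \<le> c}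
        then (if c = x then d a x x else 0) else 0)"
    by (simp only: sum.delta finite)
  finally show ?thesis unfolding mult3_def using order_antisym by auto
qed

lemma mult_e_d:
  fixes d :: "'a::{order,finite} \<Rightarrow> 'a \<Rightarrow> 'a \<Rightarrow> 'r::comm_ring_1"
  shows "mult3 (e1 x) d a b c = (if b \<le> c \<and> a = x \<and> b = x then d x x c else 0)"
proof -
  have "(\<Sum>(y1, y2) \<in> {(y1, y2). a \<le> y1 \<and> y1 \<le> b \<and> b \<le> y2 \<and> y2 \<le> c}.
         e1 x a y1 y2 * d y1 y2 c) =
        (\<Sum>p \<in> {(y1, y2). a \<le> y1 \<and> y1 \<le> b \<and> b \<le> y2 \<and> y2 \<le> c}.
         if p = (x, x) then (if a = x then d x x c else 0) else 0)"
    by (rule sum.cong) (auto simp: e1_def e3_def split: if_splits)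
  also have "\<dots> = (if (x,x) \<in> {(y1, y2). a \<le> y1 \<and> y1 \<le> b \<and> b \<le> y2 \<and> y2 \<le> c}
        then (if a = x then d x x c else 0) else 0)"
    by (simp only: sum.delta finite)
  finally show ?thesis unfolding mult3_def using order_antisym by auto
qed

lemma ee: "mult3 (e1 x) (e1 x) = (e1 x :: 'a::{order,finite} \<Rightarrow> 'a \<Rightarrow> 'a \<Rightarrow> 'r::comm_ring_1)"
  by (simp add: fun_eq_iff mult_e_d) (auto simp: e1_def e3_def)

theorem lemma4p1:
  fixes D :: "('a::{order,finite} \<Rightarrow> 'a \<Rightarrow> 'a \<Rightarrow> 'r::comm_ring_1) \<Rightarrow> ('a \<Rightarrow> 'a \<Rightarrow> 'a \<Rightarrow> 'r)"
    and x :: 'a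
  assumes "derivation3 D"
  shows "D (e1 x) = (\<lambda>a b c.
           (\<Sum>v \<in> {v. x < v}. D (e1 x) x x v * e3 x x v a b c)
         + (\<Sum>u \<in> {u. u < x}. D (e1 x) u x x * e3 u x x a b c))"
proof -
  define d where "d = D (e1 x)"
  have D1: "\<forall>f \<in> I3. D f \<in> I3"
    and M: "\<forall>f \<in> I3. \<forall>g \<in> I3. D (mult3 f g) = (\<lambda>x y z. mult3 (D f) g x y z + mult3 f (D g) x y z)"
    using assms unfolding derivation3_def by auto
  have dI: "d \<in> I3" unfolding d_def using D1 e1_I3 by blast
  have L: "d = (\<lambda>a b c. mult3 d (e1 x) a b c + mult3 (e1 x) d a b c)"
    using M[rule_format, OF e1_I3[of x] e1_I3[of x]] unfolding ee d_def .
  have eq: "d a b c = (if a \<le> b \<and> b = x \<and> c = x then d a x x else 0)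
     + (if b \<le> c \<and> a = x \<and> b = x then d x x c else 0)" for a b c
    by (subst L) (simp add: mult_d_e mult_e_d)
  have d0: "d x x x = 0" using eq[of x x x] by simp
  have Z: "d a b c = 0" if "\<not> (a \<le> b \<and> b \<le> c)" for a b c
    using dI that unfolding I3_def by blast
  have S1: "(\<Sum>v \<in> {v. x < v}. d x x v * e3 x x v a b c) =
      (if a = x \<and> b = x \<and> x < c then d x x c else 0)" for a b c
  proof -
    have "(\<Sum>v \<in> {v. x < v}. d x x v * e3 x x v a b c) =
        (\<Sum>v \<in> {v. x < v}. if v = c then (if a = x \<and> b = x then d x x c else 0) else 0)"
      by (rule sum.cong) (auto simp: e3_def)
    also have "\<dots> = (if a = x \<and> b = x \<and> x < c then d x x c else 0)"
      by (simp add: sum.delta)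
    finally show ?thesis .
  qed
  have S2: "(\<Sum>u \<in> {u. u < x}. d u x x * e3 u x x a b c) =
      (if c = x \<and> b = x \<and> a < x then d a x x else 0)" for a b c
  proof -
    have "(\<Sum>u \<in> {u. u < x}. d u x x * e3 u x x a b c) =
        (\<Sum>u \<in> {u. u < x}. if u = a then (if c = x \<and> b = x then d a x x else 0) else 0)"
      by (rule sum.cong) (auto simp: e3_def)
    also have "\<dots> = (if c = x \<and> b = x \<and> a < x then d a x x else 0)"
      by (simp add: sum.delta)
    finally show ?thesis .
  qed
  show ?thesis
    unfolding d_def[symmetric]
  proof (rule ext, rule ext, rule ext)
    fix a b c
    show "d a b c = (\<Sum>v \<in> {v. x < v}. d x x v * e3 x x v a b c)
         + (\<Sum>u \<in> {u. u < x}. d u x x * e3 u x x a b c)"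
      proof (cases "b = x")
      case False
      then show ?thesis unfolding S1 S2 using eq[of a b c] by simp
    next
      case True
      note b = True
      show ?thesis
      proof (cases "c = x")
        case True
        show ?thesis
        proof (cases "a = x")
          case True
          then show ?thesis unfolding S1 S2 using b \<open>c = x\<close> d0 by simp
        next
          case False
          have "d a x x = (if a \<le> x then d a x x else 0)"
            using eq[of a x x] False by simp
          then show ?thesis unfolding S1 S2 using b \<open>c = x\<close> False Z[of a x x]
            by (cases "a \<le> x") (simp_all add: less_le)
        qed
      next
        case False
        note cx = False
        show ?thesis
        proof (cases "a = x")
          case True
          then show ?thesis unfolding S1 S2 using b cx Z[of x x c]
            by (cases "x \<le> c") (simp_all add: less_le)
        next
          case False
          have "d a x c = 0" using eq[of a x c] False cx by simp
          then show ?thesis unfolding S1 S2 using b cx False by simp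
        qed
      qed
    qed
  qed
qed

end
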